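(* With the matrices defined in the context, the Neumann Schur complement $S_N:=\mathbf{B}\mathbf{A_N}^{-1}\mathbf{B}^T\in\mathbb{R}^{n^2\times n^2}$ satisfies $$S_N=I_{n^2}-\mathbb{1}\mathbb{1}^T,$$ where $\mathbb{1}=h(1,\dots,1)^T\in\mathbb{R}^{n^2}$ (a unit vector). Equivalently, $S_N=\mathbf{B}\mathbf{B}^\dagger$ is the orthogonal projector onto the orthogonal complement of $\operatorname{Ker}\mathbf{B}^T=\operatorname{span}\{\mathbb{1}\}$.
   Context: Fix an integer $n\ge 2$ and set $h=1/n$. Let $I_m$ denote the $m\times m$ identity matrix and $\otimes$ the Kronecker product. Let $\mathrm{B}\in\mathbb{R}^{n\times(n-1)}$ be $\mathrm{B}=\frac1h M$, where $M_{i,i}=1$ and $M_{i+1,i}=-1$ for $1\le i\le n-1$, all other entries $0$. Define $\mathrm{B}^u_x=I_n\otimes \mathrm{B}$, $\mathrm{B}^v_y=\mathrm{B}\otimes I_n$, $\mathrm{B}^q_x=I_{n-1}\otimes\mathrm{B}$, $\mathrm{B}^q_y=\mathrm{B}\otimes I_{n-1}$. Let $\mathbf{B}=\begin{bmatrix}-\mathrm{B}^u_x & -\mathrm{B}^v_y\end{bmatrix}\in\mathbb{R}^{n^2\times 2n(n-1)}$ and $\mathbf{C}=\begin{bmatrix}-(\mathrm{B}^q_y)^T & (\mathrm{B}^q_x)^T\end{bmatrix}\in\mathbb{R}^{(n-1)^2\times 2n(n-1)}$, and let $\mathbf{A_N}=\mathbf{B}^T\mathbf{B}+\mathbf{C}^T\mathbf{C}$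 (which is invertible). The superscript $\dagger$ denotes the Moore–Penrose pseudoinverse. *)

theory Defs
  imports "Jordan_Normal_Form.Matrix"
begin

definition kron :: "real mat \<Rightarrow> real mat \<Rightarrow> real mat" where
  "kron A B = mat (dim_row A * dim_row B) (dim_col A * dim_col B)
     (\<lambda>(r,c). A $$ (r div dim_row B, c div dim_col B) * B $$ (r mod dim_row B, c mod dim_col B))"

definition hcat :: "real mat \<Rightarrow> real mat \<Rightarrow> real mat" where
  "hcat A B = mat (dim_row A) (dim_col A + dim_col B)
     (\<lambda>(i,j). if j < dim_col A then A $$ (i,j) else B $$ (i, j - dim_col A))"

(* B = (1/h) M, h = 1/n, M_{i,i} = 1, M_{i+1,i} = -1 (0-indexed here) *)
definition Bmat :: "nat \<Rightarrow> real mat" where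
  "Bmat n = mat n (n - 1) (\<lambda>(i,j). real n * (if i = j then 1 else if i = j + 1 then -1 else 0))"

definition Bux :: "nat \<Rightarrow> real mat" where "Bux n = kron (1\<^sub>m n) (Bmat n)"
definition Bvy :: "nat \<Rightarrow> real mat" where "Bvy n = kron (Bmat n) (1\<^sub>m n)"
definition Bqx :: "nat \<Rightarrow> real mat" where "Bqx n = kron (1\<^sub>m (n - 1)) (Bmat n)"
definition Bqy :: "nat \<Rightarrow> real mat" where "Bqy n = kron (Bmat n) (1\<^sub>m (n - 1))"

definition bigB :: "nat \<Rightarrow> real mat" where
  "bigB n = hcat (- Bux n) (- Bvy n)"

definition bigC :: "nat \<Rightarrow> real mat" where
  "bigC n = hcat (- (Bqy n)\<^sup>T) ((Bqx n)\<^sup>T)"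

definition AN :: "nat \<Rightarrow> real mat" where
  "AN n = (bigB n)\<^sup>T * bigB n + (bigC n)\<^sup>T * bigC n"

definition onevec :: "nat \<Rightarrow> real mat" where
  "onevec n = mat (n^2) 1 (\<lambda>_. 1 / real n)"

definition is_pinv :: "real mat \<Rightarrow> real mat \<Rightarrow> bool" where
  "is_pinv A X \<longleftrightarrow> X \<in> carrier_mat (dim_col A) (dim_row A) \<and>
     A * X * A = A \<and> X * A * X = X \<and> (A * X)\<^sup>T = A * X \<and> (X * A)\<^sup>T = X * A"

end

theory Submission
  imports Defs "Jordan_Normal_Form.Determinant"
begin

lemma sum_split_plus_nat: fixes f :: "nat \<Rightarrow> 'a::comm_monoid_add"
  shows "(\<Sum>k<a+b. f k) = (\<Sum>k<a. f k) + (\<Sum>j<b. f (a+j))"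
  by (induction b) (simp_all add: add.assoc)

lemma sum_split_mult_nat: fixes f :: "nat \<Rightarrow> 'a::comm_monoid_add"
  shows "(\<Sum>k<a*b. f k) = (\<Sum>i<a. \<Sum>j<b. f (i*b+j))"
proof (induction a)
  case 0 then show ?case by simp
next
  case (Suc a)
  have "(\<Sum>k<Suc a*b. f k) = (\<Sum>k<a*b + b. f k)" by (simp add: add.commute)
  also have "\<dots> = (\<Sum>k<a*b. f k) + (\<Sum>j<b. f (a*b+j))"
    by (rule sum_split_plus_nat)
  finally show ?case using Suc by (simp add: add.commute)
qed
lemma mult_index_sum: "i < dim_row A \<Longrightarrow> j < dim_col B \<Longrightarrow> dim_col A = dim_row B \<Longrightarrow>
  (A*B) $$ (i,j) = (\<Sum>k<dim_row B. A $$ (i,k) * B $$ (k,j))"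
  by (simp add: scalar_prod_def atLeast0LessThan)

lemma kron_dims[simp]: "dim_row (kron A B) = dim_row A * dim_row B" "dim_col (kron A B) = dim_col A * dim_col B"
  unfolding kron_def by simp_all

lemma kron_carrier: "A \<in> carrier_mat a1 a2 \<Longrightarrow> B \<in> carrier_mat b1 b2 \<Longrightarrow> kron A B \<in> carrier_mat (a1*b1) (a2*b2)"
  unfolding carrier_mat_def by simp

lemma kron_index: "i < dim_row A * dim_row B \<Longrightarrow> j < dim_col A * dim_col B \<Longrightarrow>
  kron A B $$ (i,j) = A $$ (i div dim_row B, j div dim_col B) * B $$ (i mod dim_row B, j mod dim_col B)"
  unfolding kron_def by simp

lemma kron_mult:
  assumes A: "A \<in> carrier_mat a1 a2" and B: "B \<in> carrier_mat b1 b2"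
    and C: "C \<in> carrier_mat a2 c2" and D: "D \<in> carrier_mat b2 d2"
  shows "kron A B * kron C D = kron (A*C) (B*D)"
proof (rule eq_matI)
  fix i j assume i: "i < dim_row (kron (A*C) (B*D))" and j: "j < dim_col (kron (A*C) (B*D))"
  from i A B have i': "i < a1*b1" by simp
  from j C D have j': "j < c2*d2" by simp
  have b1: "0 < b1" using i' by (cases b1) auto
  have d2: "0 < d2" using j' by (cases d2) auto
  have id: "i div b1 < a1" using i' by (simp add: less_mult_imp_div_less)
  have jd: "j div d2 < c2" using j' by (simp add: less_mult_imp_div_less)
  have im: "i mod b1 < b1" using b1 by simp
  have jm: "j mod d2 < d2" using d2 by simp
  have "(kron A B * kron C D) $$ (i,j) = (\<Sum>k<a2*b2. kron A B $$ (i,k) * kron C D $$ (k,j))"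
    using mult_index_sum[of i "kron A B" j "kron C D"] A B C D i' j' by simp
  also have "\<dots> = (\<Sum>p<a2. \<Sum>q<b2. kron A B $$ (i,p*b2+q) * kron C D $$ (p*b2+q,j))"
    by (rule sum_split_mult_nat)
  also have "\<dots> = (\<Sum>p<a2. \<Sum>q<b2. (A $$ (i div b1, p) * C $$ (p, j div d2)) * (B $$ (i mod b1, q) * D $$ (q, j mod d2)))"
  proof (intro sum.cong refl)
    fix p q assume p: "p \<in> {..<a2}" and q: "q \<in> {..<b2}"
    have k: "p*b2+q < a2*b2"
    proof -
      have "p*b2+q < (p+1)*b2" using q by simp
      also have "(p+1)*b2 \<le> a2*b2" using p by (intro mult_right_mono) auto
      finally show ?thesis .
    qed
    have dv: "(p*b2+q) div b2 = p" "(p*b2+q) mod b2 = q" using q by auto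
    show "kron A B $$ (i,p*b2+q) * kron C D $$ (p*b2+q,j) = (A $$ (i div b1, p) * C $$ (p, j div d2)) * (B $$ (i mod b1, q) * D $$ (q, j mod d2))"
      using A B C D i' j' k dv by (simp add: kron_index)
  qed
  also have "\<dots> = (A*C) $$ (i div b1, j div d2) * (B*D) $$ (i mod b1, j mod d2)"
    using A B C D id jd im jm by (simp add: mult_index_sum sum_product mult_ac del: index_mult_mat(1))
  also have "\<dots> = kron (A*C) (B*D) $$ (i,j)"
    using A B C D i' j' by (simp add: kron_index)
  finally show "(kron A B * kron C D) $$ (i,j) = kron (A*C) (B*D) $$ (i,j)" .
qed (use A B C D in simp_all)

lemma transpose_kron: "(kron A B)\<^sup>T = kron A\<^sup>T B\<^sup>T"
proof (rule eq_matI)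
  fix i j assume i: "i < dim_row (kron A\<^sup>T B\<^sup>T)" and j: "j < dim_col (kron A\<^sup>T B\<^sup>T)"
  hence i': "i < dim_col A * dim_col B" and j': "j < dim_row A * dim_row B" by simp_all
  have "0 < dim_col B" "0 < dim_row B" using i' j' by (auto intro: Nat.gr0I)
  moreover have "i div dim_col B < dim_col A" "j div dim_row B < dim_row A"
    using i' j' by (simp_all add: less_mult_imp_div_less)
  ultimately show "(kron A B)\<^sup>T $$ (i,j) = kron A\<^sup>T B\<^sup>T $$ (i,j)"
    using i' j' by (simp add: kron_index)
qed simp_all

definition vcat :: "real mat \<Rightarrow> real mat \<Rightarrow> real mat" where
  "vcat A B = mat (dim_row A + dim_row B) (dim_col A)
     (\<lambda>(i,j). if i < dim_row A then A $$ (i,j) else B $$ (i - dim_row A, j))"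

lemma hcat_dims[simp]: "dim_row (hcat A B) = dim_row A" "dim_col (hcat A B) = dim_col A + dim_col B"
  unfolding hcat_def by simp_all

lemma vcat_dims[simp]: "dim_row (vcat A B) = dim_row A + dim_row B" "dim_col (vcat A B) = dim_col A"
  unfolding vcat_def by simp_all

lemma transpose_hcat: assumes "dim_row B = dim_row A" shows "(hcat A B)\<^sup>T = vcat A\<^sup>T B\<^sup>T"
  by (rule eq_matI) (use assms in \<open>auto simp: hcat_def vcat_def\<close>)

lemma hcat_mult_vcat:
  assumes "dim_col A = dim_row C" "dim_col B = dim_row D" "dim_row B = dim_row A" "dim_col D = dim_col C"
  shows "hcat A B * vcat C D = A * C + B * D"
proof (rule eq_matI)
  fix i j assume i: "i < dim_row (A * C + B * D)" and j: "j < dim_col (A * C + B * D)"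
  hence i': "i < dim_row A" and j': "j < dim_col C" using assms by simp_all
  have "(hcat A B * vcat C D) $$ (i,j) = (\<Sum>k<dim_col A + dim_col B. hcat A B $$ (i,k) * vcat C D $$ (k,j))"
    using i' j' assms by (simp add: mult_index_sum del: index_mult_mat(1))
  also have "\<dots> = (\<Sum>k<dim_col A. hcat A B $$ (i,k) * vcat C D $$ (k,j)) + (\<Sum>k<dim_col B. hcat A B $$ (i,dim_col A + k) * vcat C D $$ (dim_col A + k,j))"
    by (rule sum_split_plus_nat)
  also have "\<dots> = (\<Sum>k<dim_col A. A $$ (i,k) * C $$ (k,j)) + (\<Sum>k<dim_col B. B $$ (i,k) * D $$ (k,j))"
    using i' j' assms by (simp add: hcat_def vcat_def)
  also have "\<dots> = (A * C + B * D) $$ (i,j)"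
    using i' j' assms by (simp add: mult_index_sum del: index_mult_mat(1))
  finally show "(hcat A B * vcat C D) $$ (i,j) = (A * C + B * D) $$ (i,j)" .
qed (use assms in simp_all)

lemma mult_hcat: assumes "dim_row A = dim_row B" "dim_col M = dim_row A"
  shows "M * hcat A B = hcat (M * A) (M * B)"
proof (rule eq_matI)
  fix i j assume i: "i < dim_row (hcat (M * A) (M * B))" and j: "j < dim_col (hcat (M * A) (M * B))"
  thus "(M * hcat A B) $$ (i,j) = hcat (M * A) (M * B) $$ (i,j)"
    using assms by (simp add: mult_index_sum hcat_def del: index_mult_mat(1))
qed (use assms in simp_all)

lemma vcat_split: "X = vcat (mat r (dim_col X) (\<lambda>(i,j). X $$ (i,j))) (mat (dim_row X - r) (dim_col X) (\<lambda>(i,j). X $$ (r + i,j)))"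
  if "r \<le> dim_row X"
  by (rule eq_matI) (use that in \<open>auto simp: vcat_def\<close>)

lemma vcat_zero: "vcat (0\<^sub>m a c) (0\<^sub>m b c) = 0\<^sub>m (a+b) c"
  by (rule eq_matI) (auto simp: vcat_def)

lemma kron_zero_left: "B \<in> carrier_mat b1 b2 \<Longrightarrow> kron (0\<^sub>m a1 a2) B = 0\<^sub>m (a1*b1) (a2*b2)"
  by (rule eq_matI) (auto simp: kron_index less_mult_imp_div_less)

lemma kron_zero_right: "A \<in> carrier_mat a1 a2 \<Longrightarrow> kron A (0\<^sub>m b1 b2) = 0\<^sub>m (a1*b1) (a2*b2)"
  apply (rule eq_matI)
  subgoal for i j
    apply (subgoal_tac "0 < b1" "0 < b2")
     apply (auto simp: kron_index)
    by (auto intro: Nat.gr0I)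
  by auto

lemma sos_zero:
  fixes M N :: "real mat"
  assumes M: "M \<in> carrier_mat r c" and N: "N \<in> carrier_mat r' c"
    and z: "M\<^sup>T * M + N\<^sup>T * N = 0\<^sub>m c c"
  shows "M = 0\<^sub>m r c \<and> N = 0\<^sub>m r' c"
proof -
  have key: "\<forall>i<r. M $$ (i,j) = 0" "\<forall>i<r'. N $$ (i,j) = 0" if j: "j < c" for j
  proof -
    have "(M\<^sup>T * M + N\<^sup>T * N) $$ (j,j) = (\<Sum>i<r. M $$ (i,j)^2) + (\<Sum>i<r'. N $$ (i,j)^2)"
      using M N j by (simp add: mult_index_sum power2_eq_square del: index_mult_mat(1))
    hence e: "(\<Sum>i<r. M $$ (i,j)^2) + (\<Sum>i<r'. N $$ (i,j)^2) = 0" using z j by simp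
    have s1: "(\<Sum>i<r. M $$ (i,j)^2) \<ge> 0" "(\<Sum>i<r'. N $$ (i,j)^2) \<ge> 0" by (simp_all add: sum_nonneg)
    hence "(\<Sum>i<r. M $$ (i,j)^2) = 0" "(\<Sum>i<r'. N $$ (i,j)^2) = 0" using e by linarith+
    thus "\<forall>i<r. M $$ (i,j) = 0" "\<forall>i<r'. N $$ (i,j) = 0"
      by (simp_all add: sum_nonneg_eq_0_iff)
  qed
  show ?thesis
  proof
    show "M = 0\<^sub>m r c" by (rule eq_matI) (use M key in auto)
    show "N = 0\<^sub>m r' c" by (rule eq_matI) (use N key in auto)
  qed
qed

lemma Bmat_carrier: "Bmat n \<in> carrier_mat n (n-1)"
  unfolding Bmat_def by simp

lemma Bmat_index: "i < n \<Longrightarrow> j < n - 1 \<Longrightarrow>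
  Bmat n $$ (i,j) = real n * ((if i = j then 1 else 0) - (if i = j+1 then 1 else 0))"
  unfolding Bmat_def by auto

definition Lmat :: "nat \<Rightarrow> real mat" where
  "Lmat n = mat (n-1) n (\<lambda>(j,i). if i \<le> j then 1 / real n else 0)"

definition Rmat :: "nat \<Rightarrow> real mat" where
  "Rmat n = mat (n-1) n (\<lambda>(j,c). ((if c \<le> j then 1 else 0) - real (j+1) / real n) / real n)"

definition qmat :: "nat \<Rightarrow> real mat" where
  "qmat n = mat n n (\<lambda>_. 1 / real n)"

lemma Lmat_carrier: "Lmat n \<in> carrier_mat (n-1) n" unfolding Lmat_def by simp
lemma Rmat_carrier: "Rmat n \<in> carrier_mat (n-1) n" unfolding Rmat_def by simp
lemma qmat_carrier: "qmat n \<in> carrier_mat n n" unfolding qmat_def by simp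

lemma L_Bmat: assumes n: "n \<ge> 1" shows "Lmat n * Bmat n = 1\<^sub>m (n-1)"
proof (rule eq_matI)
  fix j k assume j: "j < dim_row (1\<^sub>m (n-1) :: real mat)" and k: "k < dim_col (1\<^sub>m (n-1) :: real mat)"
  hence j': "j < n - 1" and k': "k < n - 1" by simp_all
  have "(Lmat n * Bmat n) $$ (j,k) = (\<Sum>i<n. Lmat n $$ (j,i) * Bmat n $$ (i,k))"
    using j' k' Lmat_carrier[of n] Bmat_carrier[of n] by (simp add: mult_index_sum del: index_mult_mat(1))
  also have "\<dots> = (\<Sum>i<n. (if i = k then (if k \<le> j then 1 else 0) else 0) - (if i = k+1 then (if k+1 \<le> j then 1 else 0) else 0))"
  proof (rule sum.cong[OF refl])
    fix i assume i: "i \<in> {..<n}"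
    show "Lmat n $$ (j,i) * Bmat n $$ (i,k) = (if i = k then (if k \<le> j then 1 else 0) else 0) - (if i = k+1 then (if k+1 \<le> j then 1 else 0) else 0)"
      using i j' k' n by (auto simp: Lmat_def Bmat_index)
  qed
  also have "\<dots> = (if k \<le> j then 1 else 0) - (if k+1 \<le> j then 1 else 0)"
  proof -
    have "k < n" "Suc k < n" using k' by auto
    thus ?thesis by (simp add: sum_subtractf)
  qed
  also have "\<dots> = 1\<^sub>m (n-1) $$ (j,k)" using j' k' by auto
  finally show "(Lmat n * Bmat n) $$ (j,k) = 1\<^sub>m (n-1) $$ (j,k)" .
qed (simp_all add: Lmat_def Bmat_def)

lemma ones_Bmat: assumes n: "n \<ge> 1" shows "mat 1 n (\<lambda>_. 1) * Bmat n = 0\<^sub>m 1 (n-1)"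
proof (rule eq_matI)
  fix j k assume j: "j < dim_row (0\<^sub>m 1 (n-1) :: real mat)" and k: "k < dim_col (0\<^sub>m 1 (n-1) :: real mat)"
  hence j': "j < 1" and k': "k < n - 1" by simp_all
  have "(mat 1 n (\<lambda>_. 1) * Bmat n) $$ (j,k) = (\<Sum>i<n. mat 1 n (\<lambda>_. 1) $$ (j,i) * Bmat n $$ (i,k))"
    using j' k' Bmat_carrier[of n] by (simp add: mult_index_sum del: index_mult_mat(1))
  also have "\<dots> = (\<Sum>i<n. real n * ((if i = k then 1 else 0) - (if i = k+1 then 1 else 0)))"
    using j' k' by (intro sum.cong refl) (simp add: Bmat_index)
  also have "\<dots> = 0"
    using k' by (simp add: sum_subtractf sum_distrib_left[symmetric])
  finally show "(mat 1 n (\<lambda>_. 1) * Bmat n) $$ (j,k) = 0\<^sub>m 1 (n-1) $$ (j,k)" using j' k' by simp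
qed (simp_all add: Bmat_def)

lemma Bmat_R: assumes n: "n \<ge> 1" shows "Bmat n * Rmat n = 1\<^sub>m n - qmat n"
proof (rule eq_matI)
  fix i c assume i: "i < dim_row (1\<^sub>m n - qmat n)" and c: "c < dim_col (1\<^sub>m n - qmat n)"
  hence i': "i < n" and c': "c < n" by (simp_all add: qmat_def)
  define r where "r = (\<lambda>j. ((if c \<le> j then 1 else 0) - real (j+1) / real n) / real n)"
  have "(Bmat n * Rmat n) $$ (i,c) = (\<Sum>j<n-1. Bmat n $$ (i,j) * Rmat n $$ (j,c))"
    using i' c' Rmat_carrier[of n] Bmat_carrier[of n] by (simp add: mult_index_sum del: index_mult_mat(1))
  also have "\<dots> = (\<Sum>j<n-1. (if j = i then real n * r i else 0) - (if j + 1 = i then real n * r j else 0))"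
    using i' c' by (intro sum.cong refl) (auto simp: Bmat_index Rmat_def r_def)
  also have "\<dots> = (if i < n - 1 then real n * r i else 0) - (if 0 < i then real n * r (i-1) else 0)"
  proof -
    have "(\<Sum>j<n-1. (if j + 1 = i then real n * r j else 0)) = (if 0 < i then real n * r (i-1) else 0)"
    proof (cases i)
      case 0 then show ?thesis by simp
    next
      case (Suc i0)
      have "(\<Sum>j<n-1. (if j + 1 = i then real n * r j else 0)) = (\<Sum>j<n-1. (if j = i0 then real n * r j else 0))"
        using Suc by (intro sum.cong refl) auto
      also have "\<dots> = real n * r i0" using Suc i' by simp
      finally show ?thesis using Suc by simp
    qed
    thus ?thesis by (simp add: sum_subtractf)
  qed
  also have "\<dots> = (1\<^sub>m n - qmat n) $$ (i,c)"
  proof (cases "i < n - 1")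
    case True then show ?thesis using i' c' n by (auto simp: qmat_def r_def field_simps of_nat_diff)
  next
    case False
    hence ii: "i = n - 1" using i' by simp
    hence ri: "real i = real n - 1" using n by (simp add: of_nat_diff)
    show ?thesis using False i' c' n ri by (auto simp: qmat_def r_def field_simps)
  qed
  finally show "(Bmat n * Rmat n) $$ (i,c) = (1\<^sub>m n - qmat n) $$ (i,c)" .
qed (simp_all add: Bmat_def Rmat_def qmat_def)

lemma Bux_c: "Bux n \<in> carrier_mat (n*n) (n*(n-1))"
  unfolding Bux_def by (rule kron_carrier[OF one_carrier_mat Bmat_carrier])
lemma Bvy_c: "Bvy n \<in> carrier_mat (n*n) ((n-1)*n)"
  unfolding Bvy_def by (rule kron_carrier[OF Bmat_carrier one_carrier_mat])
lemma Bqx_c: "Bqx n \<in> carrier_mat ((n-1)*n) ((n-1)*(n-1))"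
  unfolding Bqx_def by (rule kron_carrier[OF one_carrier_mat Bmat_carrier])
lemma Bqy_c: "Bqy n \<in> carrier_mat (n*(n-1)) ((n-1)*(n-1))"
  unfolding Bqy_def by (rule kron_carrier[OF Bmat_carrier one_carrier_mat])

lemma bigB_c: "bigB n \<in> carrier_mat (n*n) (n*(n-1) + (n-1)*n)"
  using Bux_c[of n] Bvy_c[of n] unfolding bigB_def carrier_mat_def by simp
lemma bigC_c: "bigC n \<in> carrier_mat ((n-1)*(n-1)) (n*(n-1) + (n-1)*n)"
  using Bqx_c[of n] Bqy_c[of n] unfolding bigC_def carrier_mat_def by simp

lemma bigC_T: "(bigC n)\<^sup>T = vcat (- Bqy n) (Bqx n)"
  using Bqx_c[of n] Bqy_c[of n] unfolding bigC_def
  by (subst transpose_hcat) (simp_all add: transpose_uminus)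

lemma kron_BB1: "Bux n * Bqy n = kron (Bmat n) (Bmat n)"
  unfolding Bux_def Bqy_def
  by (subst kron_mult[OF one_carrier_mat Bmat_carrier Bmat_carrier one_carrier_mat])
     (use Bmat_carrier[of n] in simp)
lemma kron_BB2: "Bvy n * Bqx n = kron (Bmat n) (Bmat n)"
  unfolding Bvy_def Bqx_def
  by (subst kron_mult[OF Bmat_carrier one_carrier_mat one_carrier_mat Bmat_carrier])
     (use Bmat_carrier[of n] in simp)

lemma BC_zero: "bigB n * (bigC n)\<^sup>T = 0\<^sub>m (n*n) ((n-1)*(n-1))"
proof -
  have "bigB n * (bigC n)\<^sup>T = (- Bux n) * (- Bqy n) + (- Bvy n) * Bqx n"
    unfolding bigC_T bigB_def using Bux_c[of n] Bvy_c[of n] Bqx_c[of n] Bqy_c[of n]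
    by (subst hcat_mult_vcat) simp_all
  also have "\<dots> = kron (Bmat n) (Bmat n) + - kron (Bmat n) (Bmat n)"
    using Bux_c[of n] Bvy_c[of n] Bqx_c[of n] Bqy_c[of n] by (simp add: kron_BB1 kron_BB2)
  also have "\<dots> = 0\<^sub>m (n*n) ((n-1)*(n-1))"
    using add_uminus_minus_mat[OF kron_carrier[OF Bmat_carrier Bmat_carrier, of n n] kron_carrier[OF Bmat_carrier Bmat_carrier, of n n]]
      kron_carrier[OF Bmat_carrier Bmat_carrier, of n n]
    by simp
  finally show ?thesis .
qed

lemma cross: "(Bux n)\<^sup>T * Bvy n = Bqy n * (Bqx n)\<^sup>T"
proof -
  have BT: "(Bmat n)\<^sup>T \<in> carrier_mat (n-1) n" using Bmat_carrier[of n] by simp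
  have "(Bux n)\<^sup>T * Bvy n = kron (1\<^sub>m n) ((Bmat n)\<^sup>T) * kron (Bmat n) (1\<^sub>m n)"
    unfolding Bux_def Bvy_def transpose_kron transpose_one ..
  also have "\<dots> = kron (1\<^sub>m n * Bmat n) ((Bmat n)\<^sup>T * 1\<^sub>m n)"
    by (rule kron_mult[OF one_carrier_mat BT Bmat_carrier one_carrier_mat])
  also have "\<dots> = kron (Bmat n) ((Bmat n)\<^sup>T)" using BT Bmat_carrier[of n] by simp
  also have "\<dots> = kron (Bmat n * 1\<^sub>m (n-1)) (1\<^sub>m (n-1) * (Bmat n)\<^sup>T)" using BT Bmat_carrier[of n] by simp
  also have "\<dots> = kron (Bmat n) (1\<^sub>m (n-1)) * kron (1\<^sub>m (n-1)) ((Bmat n)\<^sup>T)"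
    by (rule kron_mult[OF Bmat_carrier one_carrier_mat one_carrier_mat BT, symmetric])
  also have "\<dots> = Bqy n * (Bqx n)\<^sup>T"
    unfolding Bqy_def Bqx_def transpose_kron transpose_one ..
  finally show ?thesis .
qed

lemma cross2: "(Bvy n)\<^sup>T * Bux n = Bqx n * (Bqy n)\<^sup>T"
proof -
  have "(Bvy n)\<^sup>T * Bux n = ((Bux n)\<^sup>T * Bvy n)\<^sup>T"
    using Bux_c[of n] Bvy_c[of n] by (simp add: transpose_mult)
  also have "\<dots> = Bqx n * (Bqy n)\<^sup>T"
    unfolding cross using Bqx_c[of n] Bqy_c[of n] by (simp add: transpose_mult)
  finally show ?thesis .
qed

lemma onevec_c: "onevec n \<in> carrier_mat (n*n) 1"
  unfolding onevec_def by (simp add: power2_eq_square)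

lemma divmod_bound: "j < n*n \<Longrightarrow> j div n < (n::nat) \<and> j mod n < n"
  by (metis less_mult_imp_div_less mod_less_divisor mult_0_right not_gr0 not_less_zero)

lemma oT_kron1: "(onevec n)\<^sup>T = kron (mat 1 n (\<lambda>_. 1 / real n)) (mat 1 n (\<lambda>_. 1))"
  by (rule eq_matI) (auto simp: onevec_def kron_index power2_eq_square dest: divmod_bound)
lemma oT_kron2: "(onevec n)\<^sup>T = kron (mat 1 n (\<lambda>_. 1)) (mat 1 n (\<lambda>_. 1 / real n))"
  by (rule eq_matI) (auto simp: onevec_def kron_index power2_eq_square dest: divmod_bound)

lemma oT_Bux: assumes n: "n \<ge> 1" shows "(onevec n)\<^sup>T * Bux n = 0\<^sub>m 1 (n*(n-1))"
proof -
  have "(onevec n)\<^sup>T * Bux n = kron (mat 1 n (\<lambda>_. 1 / real n) * 1\<^sub>m n) (mat 1 n (\<lambda>_. 1) * Bmat n)"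
    unfolding oT_kron1 Bux_def
    by (rule kron_mult[OF mat_carrier mat_carrier one_carrier_mat Bmat_carrier])
  also have "\<dots> = kron (mat 1 n (\<lambda>_. 1 / real n)) (0\<^sub>m 1 (n-1))"
    using ones_Bmat[OF n] by simp
  also have "\<dots> = 0\<^sub>m 1 (n*(n-1))"
    by (subst kron_zero_right[OF mat_carrier]) simp
  finally show ?thesis .
qed

lemma oT_Bvy: assumes n: "n \<ge> 1" shows "(onevec n)\<^sup>T * Bvy n = 0\<^sub>m 1 ((n-1)*n)"
proof -
  have "(onevec n)\<^sup>T * Bvy n = kron (mat 1 n (\<lambda>_. 1) * Bmat n) (mat 1 n (\<lambda>_. 1 / real n) * 1\<^sub>m n)"
    unfolding oT_kron2 Bvy_def
    by (rule kron_mult[OF mat_carrier mat_carrier Bmat_carrier one_carrier_mat])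
  also have "\<dots> = kron (0\<^sub>m 1 (n-1)) (mat 1 n (\<lambda>_. 1 / real n))"
    using ones_Bmat[OF n] by simp
  also have "\<dots> = 0\<^sub>m 1 ((n-1)*n)"
    by (subst kron_zero_left[OF mat_carrier]) simp
  finally show ?thesis .
qed

lemma oT_B: assumes n: "n \<ge> 1" shows "(onevec n)\<^sup>T * bigB n = 0\<^sub>m 1 (n*(n-1) + (n-1)*n)"
proof -
  have "(onevec n)\<^sup>T * bigB n = hcat ((onevec n)\<^sup>T * - Bux n) ((onevec n)\<^sup>T * - Bvy n)"
    unfolding bigB_def using Bux_c[of n] Bvy_c[of n] onevec_c[of n]
    by (subst mult_hcat) simp_all
  also have "\<dots> = hcat (- ((onevec n)\<^sup>T * Bux n)) (- ((onevec n)\<^sup>T * Bvy n))"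
    using Bux_c[of n] Bvy_c[of n] onevec_c[of n] by simp
  also have "\<dots> = 0\<^sub>m 1 (n*(n-1) + (n-1)*n)"
    unfolding oT_Bux[OF n] oT_Bvy[OF n] by (rule eq_matI) (auto simp: hcat_def)
  finally show ?thesis .
qed

lemma oTo: assumes n: "n \<ge> 1" shows "(onevec n)\<^sup>T * onevec n = 1\<^sub>m 1"
proof (rule eq_matI)
  fix i j assume "i < dim_row (1\<^sub>m 1 :: real mat)" "j < dim_col (1\<^sub>m 1 :: real mat)"
  hence ij: "i = 0" "j = 0" by auto
  have "((onevec n)\<^sup>T * onevec n) $$ (0,0) = (\<Sum>k<n^2. (1/real n) * (1/real n))"
    by (simp add: onevec_def mult_index_sum del: index_mult_mat(1))
  also have "\<dots> = 1" using n by (simp add: power2_eq_square)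
  finally show "((onevec n)\<^sup>T * onevec n) $$ (i,j) = 1\<^sub>m 1 $$ (i,j)" using ij by simp
qed (simp_all add: onevec_def)

definition Gmat :: "nat \<Rightarrow> real mat" where
  "Gmat n = vcat (- kron (1\<^sub>m n) (Rmat n)) (- kron (Rmat n) (qmat n))"

lemma Gmat_c: "Gmat n \<in> carrier_mat (n*(n-1) + (n-1)*n) (n*n)"
  unfolding Gmat_def carrier_mat_def using Rmat_carrier[of n] qmat_carrier[of n] by simp

lemma BG: assumes n: "n \<ge> 1" shows "bigB n * Gmat n = 1\<^sub>m (n^2) - onevec n * (onevec n)\<^sup>T"
proof -
  have R: "Rmat n \<in> carrier_mat (n-1) n" by (rule Rmat_carrier)
  have q: "qmat n \<in> carrier_mat n n" by (rule qmat_carrier)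
  have "bigB n * Gmat n = (- Bux n) * (- kron (1\<^sub>m n) (Rmat n)) + (- Bvy n) * (- kron (Rmat n) (qmat n))"
    unfolding bigB_def Gmat_def using Bux_c[of n] Bvy_c[of n] R q
    by (subst hcat_mult_vcat) simp_all
  also have "\<dots> = Bux n * kron (1\<^sub>m n) (Rmat n) + Bvy n * kron (Rmat n) (qmat n)"
    using Bux_c[of n] Bvy_c[of n] R q by simp
  also have "Bux n * kron (1\<^sub>m n) (Rmat n) = kron (1\<^sub>m n * 1\<^sub>m n) (Bmat n * Rmat n)"
    unfolding Bux_def by (rule kron_mult[OF one_carrier_mat Bmat_carrier one_carrier_mat R])
  also have "Bvy n * kron (Rmat n) (qmat n) = kron (Bmat n * Rmat n) (1\<^sub>m n * qmat n)"
    unfolding Bvy_def by (rule kron_mult[OF Bmat_carrier one_carrier_mat R q])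
  also have "kron (1\<^sub>m n * 1\<^sub>m n) (Bmat n * Rmat n) + kron (Bmat n * Rmat n) (1\<^sub>m n * qmat n)
     = kron (1\<^sub>m n) (1\<^sub>m n - qmat n) + kron (1\<^sub>m n - qmat n) (qmat n)"
    using q by (simp add: Bmat_R[OF n])
  also have "\<dots> = 1\<^sub>m (n^2) - onevec n * (onevec n)\<^sup>T"
  proof (rule eq_matI)
    fix i j assume i: "i < dim_row (1\<^sub>m (n^2) - onevec n * (onevec n)\<^sup>T)"
      and j: "j < dim_col (1\<^sub>m (n^2) - onevec n * (onevec n)\<^sup>T)"
    hence i': "i < n*n" and j': "j < n*n" by (simp_all add: onevec_def power2_eq_square)
    have n0: "0 < n" using n by simp
    have d: "i div n < n" "j div n < n" using i' j' by (simp_all add: less_mult_imp_div_less)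
    have m: "i mod n < n" "j mod n < n" using n0 by simp_all
    have eq: "(i div n = j div n \<and> i mod n = j mod n) \<longleftrightarrow> i = j"
      by (metis div_mult_mod_eq)
    have oo: "(onevec n * (onevec n)\<^sup>T) $$ (i,j) = 1 / real n * (1 / real n)"
      using i' j' by (simp add: onevec_def mult_index_sum power2_eq_square del: index_mult_mat(1))
    have "(kron (1\<^sub>m n) (1\<^sub>m n - qmat n) + kron (1\<^sub>m n - qmat n) (qmat n)) $$ (i,j)
       = (if i div n = j div n then 1 else 0) * ((if i mod n = j mod n then 1 else 0) - 1 / real n)
         + ((if i div n = j div n then 1 else 0) - 1 / real n) * (1 / real n)"
      using i' j' d m q by (simp add: kron_index qmat_def)
    also have "\<dots> = (if i = j then 1 else 0) - 1 / real n * (1 / real n)"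
      using eq n0 by (auto simp: field_simps)
    also have "\<dots> = (1\<^sub>m (n^2) - onevec n * (onevec n)\<^sup>T) $$ (i,j)"
      using i' j' oo by (simp add: onevec_def power2_eq_square)
    finally show "(kron (1\<^sub>m n) (1\<^sub>m n - qmat n) + kron (1\<^sub>m n - qmat n) (qmat n)) $$ (i,j) = (1\<^sub>m (n^2) - onevec n * (onevec n)\<^sup>T) $$ (i,j)" .
  qed (use q in \<open>simp_all add: onevec_def power2_eq_square\<close>)
  finally show ?thesis .
qed

lemma kron_one: "kron (1\<^sub>m a) (1\<^sub>m b) = (1\<^sub>m (a*b) :: real mat)"
proof (rule eq_matI)
  fix i j assume i: "i < dim_row (1\<^sub>m (a*b) :: real mat)" and j: "j < dim_col (1\<^sub>m (a*b) :: real mat)"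
  hence i': "i < a*b" and j': "j < a*b" by simp_all
  have b: "0 < b" using i' by (cases b) auto
  have "i div b < a" "j div b < a" using i' j' by (simp_all add: less_mult_imp_div_less)
  moreover have "(i div b = j div b \<and> i mod b = j mod b) \<longleftrightarrow> i = j" by (metis div_mult_mod_eq)
  ultimately show "kron (1\<^sub>m a) (1\<^sub>m b) $$ (i,j) = (1\<^sub>m (a*b) :: real mat) $$ (i,j)"
    using i' j' b by (auto simp: kron_index)
qed simp_all

lemma LBux: "n \<ge> 1 \<Longrightarrow> kron (1\<^sub>m n) (Lmat n) * Bux n = 1\<^sub>m (n*(n-1))"
  unfolding Bux_def
  by (subst kron_mult[OF one_carrier_mat Lmat_carrier one_carrier_mat Bmat_carrier])
     (simp add: L_Bmat kron_one)

lemma LBvy: "n \<ge> 1 \<Longrightarrow> kron (Lmat n) (1\<^sub>m n) * Bvy n = 1\<^sub>m ((n-1)*n)"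
  unfolding Bvy_def
  by (subst kron_mult[OF Lmat_carrier one_carrier_mat Bmat_carrier one_carrier_mat])
     (simp add: L_Bmat kron_one)

lemma AN_c: "AN n \<in> carrier_mat (n*(n-1) + (n-1)*n) (n*(n-1) + (n-1)*n)"
  unfolding AN_def using bigB_c[of n] bigC_c[of n] by auto

lemma quad_form:
  fixes X :: "real mat"
  assumes X: "X \<in> carrier_mat (n*(n-1) + (n-1)*n) k"
  shows "X\<^sup>T * (AN n * X) = (bigB n * X)\<^sup>T * (bigB n * X) + (bigC n * X)\<^sup>T * (bigC n * X)"
proof -
  define K where "K = n*(n-1) + (n-1)*n"
  have B: "bigB n \<in> carrier_mat (n*n) K" using bigB_c[of n] K_def by simp
  have C: "bigC n \<in> carrier_mat ((n-1)*(n-1)) K" using bigC_c[of n] K_def by simp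
  have X': "X \<in> carrier_mat K k" using X K_def by simp
  have BtB: "(bigB n)\<^sup>T * bigB n \<in> carrier_mat K K" using B by simp
  have CtC: "(bigC n)\<^sup>T * bigC n \<in> carrier_mat K K" using C by simp
  have "AN n * X = (bigB n)\<^sup>T * bigB n * X + (bigC n)\<^sup>T * bigC n * X"
    unfolding AN_def by (rule add_mult_distrib_mat[OF BtB CtC X'])
  also have "\<dots> = (bigB n)\<^sup>T * (bigB n * X) + (bigC n)\<^sup>T * (bigC n * X)"
    using B C X' by simp
  finally have 1: "AN n * X = (bigB n)\<^sup>T * (bigB n * X) + (bigC n)\<^sup>T * (bigC n * X)" .
  have "X\<^sup>T * (AN n * X) = X\<^sup>T * ((bigB n)\<^sup>T * (bigB n * X)) + X\<^sup>T * ((bigC n)\<^sup>T * (bigC n * X))"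
    unfolding 1 using B C X' by (intro mult_add_distrib_mat[of _ k K]) auto
  also have "X\<^sup>T * ((bigB n)\<^sup>T * (bigB n * X)) = (X\<^sup>T * (bigB n)\<^sup>T) * (bigB n * X)"
    using B C X' by (intro assoc_mult_mat[symmetric, of _ k K _ "n*n" _ k]) auto
  also have "X\<^sup>T * (bigB n)\<^sup>T = (bigB n * X)\<^sup>T"
    using B X' by (simp add: transpose_mult)
  also have "X\<^sup>T * ((bigC n)\<^sup>T * (bigC n * X)) = (X\<^sup>T * (bigC n)\<^sup>T) * (bigC n * X)"
    using B C X' by (intro assoc_mult_mat[symmetric, of _ k K _ "(n-1)*(n-1)" _ k]) auto
  also have "X\<^sup>T * (bigC n)\<^sup>T = (bigC n * X)\<^sup>T"
    using C X' by (simp add: transpose_mult)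
  finally show ?thesis .
qed

lemma add_zero_neg: fixes A B :: "real mat"
  assumes "A \<in> carrier_mat r c" "B \<in> carrier_mat r c" "A + B = 0\<^sub>m r c" shows "A = - B"
proof (rule eq_matI)
  fix i j assume "i < dim_row (- B)" "j < dim_col (- B)"
  hence ij: "i < r" "j < c" using assms by auto
  have "(A + B) $$ (i,j) = 0" using assms(3) ij by simp
  moreover have "(A + B) $$ (i,j) = A $$ (i,j) + B $$ (i,j)" using assms(2) ij by (intro index_add_mat(1)) auto
  ultimately have "A $$ (i,j) + B $$ (i,j) = 0" by simp
  thus "A $$ (i,j) = (- B) $$ (i,j)" using assms ij by (simp add: eq_neg_iff_add_eq_0)
qed (use assms in auto)

lemma ker_trivial:
  assumes n: "n \<ge> 1" and X: "X \<in> carrier_mat (n*(n-1) + (n-1)*n) k"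
    and BX: "bigB n * X = 0\<^sub>m (n*n) k" and CX: "bigC n * X = 0\<^sub>m ((n-1)*(n-1)) k"
  shows "X = 0\<^sub>m (n*(n-1) + (n-1)*n) k"
proof -
  define a where "a = n*(n-1)"
  define b where "b = (n-1)*n"
  define c where "c = (n-1)*(n-1)"
  define U where "U = mat a k (\<lambda>(i,j). X $$ (i,j))"
  define V where "V = mat (dim_row X - a) k (\<lambda>(i,j). X $$ (a + i,j))"
  have U: "U \<in> carrier_mat a k" unfolding U_def by simp
  have V: "V \<in> carrier_mat b k" unfolding V_def using X a_def b_def by simp
  have XUV: "X = vcat U V" unfolding U_def V_def using vcat_split[of a X] X a_def by simp
  have ux: "Bux n \<in> carrier_mat (n*n) a" using Bux_c[of n] a_def by simp
  have vy: "Bvy n \<in> carrier_mat (n*n) b" using Bvy_c[of n] b_def by simp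
  have qx: "Bqx n \<in> carrier_mat b c" using Bqx_c[of n] b_def c_def by simp
  have qy: "Bqy n \<in> carrier_mat a c" using Bqy_c[of n] a_def c_def by simp
  have e1: "- Bux n * U + - Bvy n * V = 0\<^sub>m (n*n) k"
    using BX unfolding XUV bigB_def using ux vy U V by (subst (asm) hcat_mult_vcat) auto
  have e1': "Bux n * U = - (Bvy n * V)"
  proof -
    have "- (Bux n * U) = - (- (Bvy n * V))"
      using e1 ux vy U V by (intro add_zero_neg[of _ "n*n" k]) auto
    hence "- (- (Bux n * U)) = - (Bvy n * V)" by simp
    thus ?thesis by simp
  qed
  have e2: "- (Bqy n)\<^sup>T * U + (Bqx n)\<^sup>T * V = 0\<^sub>m c k"
    using CX unfolding XUV bigC_def using qx qy U V c_def by (subst (asm) hcat_mult_vcat) auto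
  hence e2': "(Bqy n)\<^sup>T * U = (Bqx n)\<^sup>T * V"
  proof -
    have "- ((Bqy n)\<^sup>T * U) = - ((Bqx n)\<^sup>T * V)"
      using e2 qx qy U V by (intro add_zero_neg[of _ c k]) auto
    hence "- (- ((Bqy n)\<^sup>T * U)) = - (- ((Bqx n)\<^sup>T * V))" by simp
    thus ?thesis by simp
  qed
  have "Bqy n * ((Bqy n)\<^sup>T * U) = Bqy n * ((Bqx n)\<^sup>T * V)" by (simp add: e2')
  also have "\<dots> = (Bqy n * (Bqx n)\<^sup>T) * V"
    using qx qy V by (intro assoc_mult_mat[symmetric, of _ a c _ b _ k]) auto
  also have "\<dots> = ((Bux n)\<^sup>T * Bvy n) * V" by (simp add: cross)
  also have "\<dots> = (Bux n)\<^sup>T * (Bvy n * V)"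
    using ux vy V by (intro assoc_mult_mat[of _ a "n*n" _ b _ k]) auto
  also have "\<dots> = - ((Bux n)\<^sup>T * (Bux n * U))"
    unfolding e1' using ux vy V by simp
  finally have t: "Bqy n * ((Bqy n)\<^sup>T * U) = - ((Bux n)\<^sup>T * (Bux n * U))" .
  have "U\<^sup>T * ((Bux n)\<^sup>T * (Bux n * U)) + U\<^sup>T * (Bqy n * ((Bqy n)\<^sup>T * U)) = U\<^sup>T * ((Bux n)\<^sup>T * (Bux n * U)) + - (U\<^sup>T * ((Bux n)\<^sup>T * (Bux n * U)))"
    unfolding t using ux U by simp
  also have "\<dots> = 0\<^sub>m k k"
    using ux U add_uminus_minus_mat[of "U\<^sup>T * ((Bux n)\<^sup>T * (Bux n * U))" k k] by simp
  finally have z: "U\<^sup>T * ((Bux n)\<^sup>T * (Bux n * U)) + U\<^sup>T * (Bqy n * ((Bqy n)\<^sup>T * U)) = 0\<^sub>m k k" .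
  have s1: "U\<^sup>T * ((Bux n)\<^sup>T * (Bux n * U)) = (Bux n * U)\<^sup>T * (Bux n * U)"
  proof -
    have "U\<^sup>T * ((Bux n)\<^sup>T * (Bux n * U)) = (U\<^sup>T * (Bux n)\<^sup>T) * (Bux n * U)"
      using ux U by (intro assoc_mult_mat[symmetric, of _ k a _ "n*n" _ k]) auto
    thus ?thesis using ux U by (simp add: transpose_mult)
  qed
  have s2: "U\<^sup>T * (Bqy n * ((Bqy n)\<^sup>T * U)) = ((Bqy n)\<^sup>T * U)\<^sup>T * ((Bqy n)\<^sup>T * U)"
  proof -
    have "U\<^sup>T * (Bqy n * ((Bqy n)\<^sup>T * U)) = (U\<^sup>T * Bqy n) * ((Bqy n)\<^sup>T * U)"
      using qy U by (intro assoc_mult_mat[symmetric, of _ k a _ c _ k]) auto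
    thus ?thesis using qy U by (simp add: transpose_mult)
  qed
  have uz: "Bux n * U = 0\<^sub>m (n*n) k"
    using sos_zero[of "Bux n * U" "n*n" k "(Bqy n)\<^sup>T * U" c] z s1 s2 ux qy U by auto
  have U0: "U = 0\<^sub>m a k"
  proof -
    have "U = (kron (1\<^sub>m n) (Lmat n) * Bux n) * U" using LBux[OF n] U a_def by simp
    also have "\<dots> = kron (1\<^sub>m n) (Lmat n) * (Bux n * U)"
      using ux U kron_carrier[OF one_carrier_mat Lmat_carrier, of n n]
      by (intro assoc_mult_mat[of _ a "n*n" _ a _ k]) (auto simp: a_def)
    also have "\<dots> = 0\<^sub>m a k" unfolding uz a_def by (rule right_mult_zero_mat[OF kron_carrier[OF one_carrier_mat Lmat_carrier, of n n]])
    finally show ?thesis .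
  qed
  have vz: "Bvy n * V = 0\<^sub>m (n*n) k"
  proof -
    have "Bvy n * V = - (Bux n * U)" using e1' by simp
    thus ?thesis unfolding uz by auto
  qed
  have V0: "V = 0\<^sub>m b k"
  proof -
    have "V = (kron (Lmat n) (1\<^sub>m n) * Bvy n) * V" using LBvy[OF n] V b_def by simp
    also have "\<dots> = kron (Lmat n) (1\<^sub>m n) * (Bvy n * V)"
      using vy V kron_carrier[OF Lmat_carrier one_carrier_mat, of n n]
      by (intro assoc_mult_mat[of _ b "n*n" _ b _ k]) (auto simp: b_def)
    also have "\<dots> = 0\<^sub>m b k" unfolding vz b_def by (rule right_mult_zero_mat[OF kron_carrier[OF Lmat_carrier one_carrier_mat, of n n]])
    finally show ?thesis .
  qed
  show ?thesis unfolding XUV U0 V0 vcat_zero a_def b_def ..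
qed

lemma mtm_zero: fixes M :: "real mat"
  assumes M: "M \<in> carrier_mat r c" and z: "M\<^sup>T * M = 0\<^sub>m c c" shows "M = 0\<^sub>m r c"
proof -
  have "(0\<^sub>m 0 c :: real mat)\<^sup>T * 0\<^sub>m 0 c = 0\<^sub>m c c" by (rule eq_matI) auto
  hence "M\<^sup>T * M + (0\<^sub>m 0 c :: real mat)\<^sup>T * 0\<^sub>m 0 c = 0\<^sub>m c c" using z M by simp
  thus ?thesis using sos_zero[OF M zero_carrier_mat[of 0 c]] by blast
qed

lemma minus_zero_eq: fixes P Q :: "real mat"
  assumes "P \<in> carrier_mat r c" "Q \<in> carrier_mat r c" "P - Q = 0\<^sub>m r c" shows "P = Q"
proof (rule eq_matI)
  fix i j assume "i < dim_row Q" "j < dim_col Q"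
  hence ij: "i < r" "j < c" using assms by auto
  have "(P - Q) $$ (i,j) = 0" using assms(3) ij by simp
  moreover have "(P - Q) $$ (i,j) = P $$ (i,j) - Q $$ (i,j)" using assms(2) ij by (intro index_minus_mat(1)) auto
  ultimately show "P $$ (i,j) = Q $$ (i,j)" by simp
qed (use assms in auto)

lemma AN_invertible: assumes n: "n \<ge> 1" shows "invertible_mat (AN n)"
proof -
  define K where "K = n*(n-1) + (n-1)*n"
  have A: "AN n \<in> carrier_mat K K" using AN_c[of n] K_def by simp
  have "det (AN n) \<noteq> 0"
  proof
    assume "det (AN n) = 0"
    then obtain v where v: "v \<in> carrier_vec K" "v \<noteq> 0\<^sub>v K" "AN n *\<^sub>v v = 0\<^sub>v K"
      using det_0_iff_vec_prod_zero[OF A] by blast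
    define X where "X = mat K 1 (\<lambda>(i,j). v $ i)"
    have X: "X \<in> carrier_mat K 1" unfolding X_def by simp
    have colX: "col X 0 = v" unfolding X_def using v(1) by (intro eq_vecI) auto
    have AX: "AN n * X = 0\<^sub>m K 1"
    proof (rule eq_matI)
      fix i j assume "i < dim_row (0\<^sub>m K 1 :: real mat)" "j < dim_col (0\<^sub>m K 1 :: real mat)"
      hence ij: "i < K" "j = 0" by auto
      have "(AN n * X) $$ (i,j) = row (AN n) i \<bullet> col X 0" using ij A X by simp
      also have "\<dots> = (AN n *\<^sub>v v) $ i" unfolding colX using ij A by simp
      also have "\<dots> = 0" using v(3) ij by simp
      finally show "(AN n * X) $$ (i,j) = 0\<^sub>m K 1 $$ (i,j)" using ij by simp
    qed (use A X in auto)
    have "(bigB n * X)\<^sup>T * (bigB n * X) + (bigC n * X)\<^sup>T * (bigC n * X) = X\<^sup>T * (AN n * X)"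
      using quad_form[of X n 1] X K_def by simp
    also have "\<dots> = 0\<^sub>m 1 1" unfolding AX using X by simp
    finally have "(bigB n * X)\<^sup>T * (bigB n * X) + (bigC n * X)\<^sup>T * (bigC n * X) = 0\<^sub>m 1 1" .
    moreover have "bigB n * X \<in> carrier_mat (n*n) 1" "bigC n * X \<in> carrier_mat ((n-1)*(n-1)) 1"
      using bigB_c[of n] bigC_c[of n] X K_def by auto
    ultimately have "bigB n * X = 0\<^sub>m (n*n) 1 \<and> bigC n * X = 0\<^sub>m ((n-1)*(n-1)) 1"
      using sos_zero by blast
    hence "X = 0\<^sub>m K 1" using ker_trivial[OF n, of X 1] X K_def by simp
    hence "v = 0\<^sub>v K" using colX by auto
    with v(2) show False by simp
  qed
  from det_non_zero_imp_unit[OF A this, of "()"]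
  obtain B where B: "B \<in> carrier_mat K K" "B * AN n = 1\<^sub>m K" "AN n * B = 1\<^sub>m K"
    unfolding Units_def ring_mat_def by auto
  show ?thesis unfolding invertible_mat_def inverts_mat_def square_mat.simps
    using A B by auto
qed

lemma minus_zero_mat_r: "A \<in> carrier_mat r c \<Longrightarrow> A - 0\<^sub>m r c = (A :: real mat)"
  by (rule eq_matI) auto

lemma E_zero:
  assumes n: "n \<ge> 1" and E: "E \<in> carrier_mat (n*n) (n*n)"
    and EB: "E * bigB n = 0\<^sub>m (n*n) (n*(n-1) + (n-1)*n)" and Eo: "E * onevec n = 0\<^sub>m (n*n) 1"
  shows "E = 0\<^sub>m (n*n) (n*n)"
proof -
  define K where "K = n*(n-1) + (n-1)*n"
  have B: "bigB n \<in> carrier_mat (n*n) K" using bigB_c[of n] K_def by simp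
  have G: "Gmat n \<in> carrier_mat K (n*n)" using Gmat_c[of n] K_def by simp
  have o: "onevec n \<in> carrier_mat (n*n) 1" by (rule onevec_c)
  have oo: "onevec n * (onevec n)\<^sup>T \<in> carrier_mat (n*n) (n*n)" using o by simp
  have BG': "bigB n * Gmat n = 1\<^sub>m (n*n) - onevec n * (onevec n)\<^sup>T"
    using BG[OF n] by (simp add: power2_eq_square)
  have one: "1\<^sub>m (n*n) = bigB n * Gmat n + onevec n * (onevec n)\<^sup>T"
    unfolding BG' by (rule eq_matI) (use oo in auto)
  have "E = E * 1\<^sub>m (n*n)" using E by simp
  also have "\<dots> = E * (bigB n * Gmat n) + E * (onevec n * (onevec n)\<^sup>T)"
    unfolding one using E B G oo by (intro mult_add_distrib_mat[of _ "n*n" "n*n"]) auto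
  also have "E * (bigB n * Gmat n) = (E * bigB n) * Gmat n"
    using E B G by (intro assoc_mult_mat[symmetric, of _ "n*n" "n*n" _ K _ "n*n"]) auto
  also have "E * (onevec n * (onevec n)\<^sup>T) = (E * onevec n) * (onevec n)\<^sup>T"
    using E o by (intro assoc_mult_mat[symmetric, of _ "n*n" "n*n" _ 1 _ "n*n"]) auto
  finally show ?thesis unfolding EB Eo K_def[symmetric] using G o by simp
qed

lemma Bt_o: assumes n: "n \<ge> 1" shows "(bigB n)\<^sup>T * onevec n = 0\<^sub>m (n*(n-1) + (n-1)*n) 1"
proof -
  have "(bigB n)\<^sup>T * onevec n = ((onevec n)\<^sup>T * bigB n)\<^sup>T"
    using bigB_c[of n] onevec_c[of n] by (simp add: transpose_mult)
  thus ?thesis unfolding oT_B[OF n] by simp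
qed

lemma Qo: assumes n: "n \<ge> 1" shows "(1\<^sub>m (n*n) - onevec n * (onevec n)\<^sup>T) * onevec n = 0\<^sub>m (n*n) 1"
proof -
  have o: "onevec n \<in> carrier_mat (n*n) 1" by (rule onevec_c)
  have "(1\<^sub>m (n*n) - onevec n * (onevec n)\<^sup>T) * onevec n = 1\<^sub>m (n*n) * onevec n - onevec n * (onevec n)\<^sup>T * onevec n"
    using o by (intro minus_mult_distrib_mat[of _ "n*n" "n*n"]) auto
  also have "onevec n * (onevec n)\<^sup>T * onevec n = onevec n * ((onevec n)\<^sup>T * onevec n)"
    using o by (intro assoc_mult_mat[of _ "n*n" 1 _ "n*n" _ 1]) auto
  also have "\<dots> = onevec n" unfolding oTo[OF n] using o by simp
  finally show ?thesis using o by simp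
qed

lemma QB: assumes n: "n \<ge> 1" shows "(1\<^sub>m (n*n) - onevec n * (onevec n)\<^sup>T) * bigB n = bigB n"
proof -
  define K where "K = n*(n-1) + (n-1)*n"
  have B: "bigB n \<in> carrier_mat (n*n) K" using bigB_c[of n] K_def by simp
  have o: "onevec n \<in> carrier_mat (n*n) 1" by (rule onevec_c)
  have "(1\<^sub>m (n*n) - onevec n * (onevec n)\<^sup>T) * bigB n = 1\<^sub>m (n*n) * bigB n - onevec n * (onevec n)\<^sup>T * bigB n"
    using o B by (intro minus_mult_distrib_mat[of _ "n*n" "n*n"]) auto
  also have "onevec n * (onevec n)\<^sup>T * bigB n = onevec n * ((onevec n)\<^sup>T * bigB n)"
    using o B by (intro assoc_mult_mat[of _ "n*n" 1 _ "n*n" _ K]) auto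
  also have "\<dots> = 0\<^sub>m (n*n) K" unfolding oT_B[OF n] K_def[symmetric] using o by simp
  finally show ?thesis using B by (simp add: minus_zero_mat_r)
qed

theorem corollary2:
  fixes n :: nat
  assumes "n \<ge> 2"
  shows "invertible_mat (AN n) \<and>
    (\<forall>Ainv. inverts_mat (AN n) Ainv \<and> inverts_mat Ainv (AN n) \<longrightarrow>
       bigB n * Ainv * (bigB n)\<^sup>T = 1\<^sub>m (n^2) - onevec n * (onevec n)\<^sup>T \<and>
       (\<forall>X. is_pinv (bigB n) X \<longrightarrow> bigB n * Ainv * (bigB n)\<^sup>T = bigB n * X))"
proof -
  have n: "n \<ge> 1" using assms by simp
  define K where "K = n*(n-1) + (n-1)*n"
  define N where "N = n*n"
  define c where "c = (n-1)*(n-1)"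
  define B where "B = bigB n"
  define C where "C = bigC n"
  define A where "A = AN n"
  define ov where "ov = onevec n"
  define Q where "Q = 1\<^sub>m N - ov * ov\<^sup>T"
  have Bc: "B \<in> carrier_mat N K" unfolding K_def N_def B_def by (rule bigB_c)
  have Cc: "C \<in> carrier_mat c K" unfolding K_def c_def C_def by (rule bigC_c)
  have Ac: "A \<in> carrier_mat K K" unfolding K_def A_def by (rule AN_c)
  have oc: "ov \<in> carrier_mat N 1" unfolding N_def ov_def by (rule onevec_c)
  have Qc: "Q \<in> carrier_mat N N" unfolding Q_def by (rule minus_carrier_mat) (use oc in simp)
  have Adef: "A = B\<^sup>T * B + C\<^sup>T * C" unfolding A_def B_def C_def AN_def ..
  have Bto: "B\<^sup>T * ov = 0\<^sub>m K 1" unfolding B_def ov_def K_def by (rule Bt_o[OF n])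
  have Qo': "Q * ov = 0\<^sub>m N 1" unfolding Q_def N_def ov_def by (rule Qo[OF n])
  have QB': "Q * B = B" unfolding Q_def N_def ov_def B_def by (rule QB[OF n])
  have Ez: "E = 0\<^sub>m N N" if "E \<in> carrier_mat N N" "E * B = 0\<^sub>m N K" "E * ov = 0\<^sub>m N 1" for E
    using that unfolding N_def K_def B_def ov_def by (rule E_zero[OF n])
  have CBt: "C * B\<^sup>T = 0\<^sub>m c N"
  proof -
    have "C * B\<^sup>T = (B * C\<^sup>T)\<^sup>T" using Bc Cc by (simp add: transpose_mult)
    also have "B * C\<^sup>T = 0\<^sub>m N c" unfolding B_def C_def N_def c_def by (rule BC_zero)
    finally show ?thesis by simp
  qed
  have part2: "B * Ainv * B\<^sup>T = Q \<and> (\<forall>X. is_pinv B X \<longrightarrow> B * Ainv * B\<^sup>T = B * X)"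
    if inv: "inverts_mat A Ainv" "inverts_mat Ainv A" for Ainv
  proof -
    have AAi: "A * Ainv = 1\<^sub>m K" using inv(1) Ac unfolding inverts_mat_def by simp
    have AiA: "Ainv * A = 1\<^sub>m (dim_row Ainv)" using inv(2) unfolding inverts_mat_def by simp
    have "dim_col Ainv = K" using arg_cong[OF AAi, of dim_col] by simp
    moreover have "dim_row Ainv = K" using arg_cong[OF AiA, of dim_col] Ac by simp
    ultimately have Aic: "Ainv \<in> carrier_mat K K" by auto
    have AiA': "Ainv * A = 1\<^sub>m K" using AiA Aic by simp
    define P where "P = B * Ainv * B\<^sup>T"
    have Pc: "P \<in> carrier_mat N N" unfolding P_def using Bc Aic by simp
    have BBt: "B * B\<^sup>T \<in> carrier_mat N N" using Bc by simp
    have ABt: "A * B\<^sup>T = B\<^sup>T * (B * B\<^sup>T)"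
    proof -
      have "A * B\<^sup>T = B\<^sup>T * B * B\<^sup>T + C\<^sup>T * C * B\<^sup>T"
        unfolding Adef using Bc Cc by (intro add_mult_distrib_mat[of _ K K]) auto
      also have "B\<^sup>T * B * B\<^sup>T = B\<^sup>T * (B * B\<^sup>T)"
        using Bc by (intro assoc_mult_mat[of _ K N _ K _ N]) auto
      also have "C\<^sup>T * C * B\<^sup>T = C\<^sup>T * (C * B\<^sup>T)"
        using Bc Cc by (intro assoc_mult_mat[of _ K c _ K _ N]) auto
      also have "\<dots> = 0\<^sub>m K N" unfolding CBt using Cc by simp
      finally show ?thesis using Bc by simp
    qed
    have c1: "Ainv * (B\<^sup>T * (B * B\<^sup>T)) = B\<^sup>T"
    proof -
      have "Ainv * (B\<^sup>T * (B * B\<^sup>T)) = Ainv * (A * B\<^sup>T)" unfolding ABt ..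
      also have "\<dots> = (Ainv * A) * B\<^sup>T"
        using Aic Ac Bc by (intro assoc_mult_mat[symmetric, of _ K K _ K _ N]) auto
      finally show ?thesis unfolding AiA' using Bc by simp
    qed
    have PBB: "P * (B * B\<^sup>T) = B * B\<^sup>T"
    proof -
      have "P * (B * B\<^sup>T) = (B * Ainv) * (B\<^sup>T * (B * B\<^sup>T))"
        unfolding P_def using Bc Aic by (intro assoc_mult_mat[of _ N K _ N _ N]) auto
      also have "\<dots> = B * (Ainv * (B\<^sup>T * (B * B\<^sup>T)))"
        using Bc Aic by (intro assoc_mult_mat[of _ N K _ K _ N]) auto
      finally show ?thesis unfolding c1 .
    qed
    define E where "E = P - Q"
    have Ec: "E \<in> carrier_mat N N" unfolding E_def by (rule minus_carrier_mat[OF Qc])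
    have EBB: "E * (B * B\<^sup>T) = 0\<^sub>m N N"
    proof -
      have "E * (B * B\<^sup>T) = P * (B * B\<^sup>T) - Q * (B * B\<^sup>T)"
        unfolding E_def using Pc Qc BBt by (intro minus_mult_distrib_mat[of _ N N]) auto
      also have "Q * (B * B\<^sup>T) = (Q * B) * B\<^sup>T"
        using Qc Bc by (intro assoc_mult_mat[symmetric, of _ N N _ K _ N]) auto
      finally show ?thesis unfolding PBB QB' using BBt by simp
    qed
    have EB: "E * B = 0\<^sub>m N K"
    proof -
      have EBc: "E * B \<in> carrier_mat N K" using Ec Bc by simp
      have "(E * B) * (E * B)\<^sup>T = (E * B) * (B\<^sup>T * E\<^sup>T)" using Ec Bc by (simp add: transpose_mult)
      also have "\<dots> = E * (B * (B\<^sup>T * E\<^sup>T))"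
        using Ec Bc by (intro assoc_mult_mat[of _ N N _ K _ N]) auto
      also have "B * (B\<^sup>T * E\<^sup>T) = (B * B\<^sup>T) * E\<^sup>T"
        using Ec Bc by (intro assoc_mult_mat[symmetric, of _ N K _ N _ N]) auto
      also have "E * ((B * B\<^sup>T) * E\<^sup>T) = (E * (B * B\<^sup>T)) * E\<^sup>T"
        using Ec BBt by (intro assoc_mult_mat[symmetric, of _ N N _ N _ N]) auto
      finally have "(E * B) * (E * B)\<^sup>T = 0\<^sub>m N N" unfolding EBB using Ec by simp
      hence z: "((E * B)\<^sup>T)\<^sup>T * (E * B)\<^sup>T = 0\<^sub>m N N" by simp
      have EBt: "(E * B)\<^sup>T \<in> carrier_mat K N" using EBc by simp
      have "(E * B)\<^sup>T = 0\<^sub>m K N" by (rule mtm_zero[OF EBt z])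
      hence "((E * B)\<^sup>T)\<^sup>T = (0\<^sub>m K N)\<^sup>T" by simp
      thus ?thesis by simp
    qed
    have Eo: "E * ov = 0\<^sub>m N 1"
    proof -
      have "E * ov = P * ov - Q * ov"
        unfolding E_def using Pc Qc oc by (intro minus_mult_distrib_mat[of _ N N]) auto
      also have "P * ov = (B * Ainv) * (B\<^sup>T * ov)"
        unfolding P_def using Bc Aic oc by (intro assoc_mult_mat[of _ N K _ N _ 1]) auto
      also have "\<dots> = 0\<^sub>m N 1" unfolding Bto using Bc Aic by simp
      finally show ?thesis unfolding Qo' by simp
    qed
    have "E = 0\<^sub>m N N" by (rule Ez[OF Ec EB Eo])
    hence PQ: "P = Q" unfolding E_def by (intro minus_zero_eq[OF Pc Qc])
    have pinv: "P = B * X" if X: "is_pinv B X" for X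
    proof -
      from X have Xc: "X \<in> carrier_mat K N" and BXB: "B * X * B = B" and sym: "(B * X)\<^sup>T = B * X"
        unfolding is_pinv_def using Bc by auto
      define E' where "E' = B * X - Q"
      have BXc: "B * X \<in> carrier_mat N N" using Bc Xc by simp
      have E'c: "E' \<in> carrier_mat N N" unfolding E'_def by (rule minus_carrier_mat[OF Qc])
      have E'B: "E' * B = 0\<^sub>m N K"
      proof -
        have "E' * B = B * X * B - Q * B"
          unfolding E'_def using BXc Qc Bc by (intro minus_mult_distrib_mat[of _ N N]) auto
        thus ?thesis unfolding BXB QB' using Bc by simp
      qed
      have E'o: "E' * ov = 0\<^sub>m N 1"
      proof -
        have "E' * ov = B * X * ov - Q * ov"
          unfolding E'_def using BXc Qc oc by (intro minus_mult_distrib_mat[of _ N N]) auto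
        also have "B * X * ov = (B * X)\<^sup>T * ov" using sym by simp
        also have "(B * X)\<^sup>T * ov = (X\<^sup>T * B\<^sup>T) * ov" using Bc Xc by (simp add: transpose_mult)
        also have "\<dots> = X\<^sup>T * (B\<^sup>T * ov)"
          using Bc Xc oc by (intro assoc_mult_mat[of _ N K _ N _ 1]) auto
        also have "\<dots> = 0\<^sub>m N 1" unfolding Bto using Xc by simp
        finally show ?thesis unfolding Qo' by simp
      qed
      have "E' = 0\<^sub>m N N" by (rule Ez[OF E'c E'B E'o])
      hence "B * X = Q" unfolding E'_def by (intro minus_zero_eq[OF BXc Qc])
      thus ?thesis using PQ by simp
    qed
    show ?thesis using PQ pinv unfolding P_def by auto
  qed
  have inv: "invertible_mat (AN n)" by (rule AN_invertible[OF n])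
  have Qeq: "1\<^sub>m (n^2) - onevec n * (onevec n)\<^sup>T = Q"
    unfolding Q_def N_def ov_def by (simp add: power2_eq_square)
  have p2: "\<And>Ainv. inverts_mat (AN n) Ainv \<Longrightarrow> inverts_mat Ainv (AN n) \<Longrightarrow>
     bigB n * Ainv * (bigB n)\<^sup>T = Q \<and> (\<forall>X. is_pinv (bigB n) X \<longrightarrow> bigB n * Ainv * (bigB n)\<^sup>T = bigB n * X)"
    using part2 unfolding A_def B_def .
  show ?thesis unfolding Qeq using inv p2 by blast
qed

end
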